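(* Let $p$ be an odd prime and $G$ an extraspecial $p$-group of exponent $p^2$. Let $V,B,T,Q$ be as in the context and let $\mathcal B=\{v_1,w_1,\dots,v_n,w_n\}$ be a special symplectic basis for $(B,T)$. (i) If $v,w\in V\setminus\{0\}$ are distinct with $T(v)=T(w)$, and either both $v,w\notin\ker(T)$ or both $v,w\notin\mathrm{span}(w_1)$, then $v$ and $w$ lie in the same $Q$-orbit. (ii) If $|G|=p^3$, the action of $Q$ on $V\setminus\{0\}$ has exactly $2p-2$ orbits, represented by $av_1$ and $bw_1$ with $a,b\in GF(p)\setminus\{0\}$. (iii) If $|G|>p^3$, the action of $Q$ on $V\setminus\{0\}$ has exactly $2p-1$ orbits, represented by $av_1$, $bw_1$ ($a,b\in GF(p)\setminus\{0\}$) and $v_2$.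
   Context: A special $p$-group is a finite $p$-group whose center, derived subgroup and Frattini subgroup coincide and are elementary abelian; it is extraspecial if $|Z(G)|=p$. Here $V=G/Z(G)$ is a $GF(p)$-vector space, $Z(G)$ is identified with $GF(p)$, $B:V\times V\to GF(p)$ is the nondegenerate alternating form $B(gZ(G),hZ(G))=[g,h]=ghg^{-1}h^{-1}$, and $T:V\to GF(p)$ is the linear map $T(gZ(G))=g^p$ (nonzero since $\exp(G)=p^2$). A special symplectic basis is a basis $\{v_1,w_1,\dots,v_n,w_n\}$ of $V$ with $B(v_i,w_i)=1$, $B(v_i,w_j)=B(v_i,v_j)=B(w_i,w_j)=0$ for $i\ne j$, $T(v_1)=1$ and $T(u)=0$ for all other basis vectors $u$; such a basis exists. $\mathrm{Aut}_{Z(G)}(G)$ is the group of automorphisms of $G$ acting trivially on $Z(G)$, for such $\varphi$ the map $f_\varphi:V\to V$ is $f_\varphi(gZ(G))=\varphi(g)Z(G)$, and $Q=\{f_\varphi:\varphi\in\mathrm{Aut}_{Z(G)}(G)\}$ acts on $V$ by $(f,v)\mapsto f(v)$. *)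

theory Defs
  imports "HOL-Algebra.Algebra"
begin

definition grp_center :: "('a, 'b) monoid_scheme \<Rightarrow> 'a set" where
  "grp_center G = {z \<in> carrier G. \<forall>g \<in> carrier G. z \<otimes>\<^bsub>G\<^esub> g = g \<otimes>\<^bsub>G\<^esub> z}"

definition grp_comm :: "('a, 'b) monoid_scheme \<Rightarrow> 'a \<Rightarrow> 'a \<Rightarrow> 'a" where
  "grp_comm G g h = g \<otimes>\<^bsub>G\<^esub> h \<otimes>\<^bsub>G\<^esub> inv\<^bsub>G\<^esub> g \<otimes>\<^bsub>G\<^esub> inv\<^bsub>G\<^esub> h"

definition maximal_subgroup :: "'a set \<Rightarrow> ('a, 'b) monoid_scheme \<Rightarrow> bool" where
  "maximal_subgroup H G \<longleftrightarrow> subgroup H G \<and> H \<noteq> carrier G \<and>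
     (\<forall>K. subgroup K G \<and> H \<subseteq> K \<longrightarrow> K = H \<or> K = carrier G)"

definition frattini :: "('a, 'b) monoid_scheme \<Rightarrow> 'a set" where
  "frattini G = carrier G \<inter> \<Inter> {H. maximal_subgroup H G}"

definition grp_exponent :: "('a, 'b) monoid_scheme \<Rightarrow> nat" where
  "grp_exponent G = (LEAST n. 0 < n \<and> (\<forall>g \<in> carrier G. g [^]\<^bsub>G\<^esub> n = \<one>\<^bsub>G\<^esub>))"

definition p_group :: "nat \<Rightarrow> ('a, 'b) monoid_scheme \<Rightarrow> bool" where
  "p_group p G \<longleftrightarrow> group G \<and> finite (carrier G) \<and> (\<exists>k. order G = p ^ k)"

definition elementary_abelian_subgroup :: "nat \<Rightarrow> 'a set \<Rightarrow> ('a, 'b) monoid_scheme \<Rightarrow> bool" where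
  "elementary_abelian_subgroup p H G \<longleftrightarrow> subgroup H G \<and>
     (\<forall>a \<in> H. \<forall>b \<in> H. a \<otimes>\<^bsub>G\<^esub> b = b \<otimes>\<^bsub>G\<^esub> a) \<and>
     (\<forall>a \<in> H. a [^]\<^bsub>G\<^esub> p = \<one>\<^bsub>G\<^esub>)"

definition special_p_group :: "nat \<Rightarrow> ('a, 'b) monoid_scheme \<Rightarrow> bool" where
  "special_p_group p G \<longleftrightarrow> p_group p G \<and>
     grp_center G = derived G (carrier G) \<and> grp_center G = frattini G \<and>
     elementary_abelian_subgroup p (grp_center G) G"

definition extraspecial_p_group :: "nat \<Rightarrow> ('a, 'b) monoid_scheme \<Rightarrow> bool" where
  "extraspecial_p_group p G \<longleftrightarrow> special_p_group p G \<and> card (grp_center G) = p"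

abbreviation Vsp :: "('a, 'b) monoid_scheme \<Rightarrow> 'a set monoid" where
  "Vsp G \<equiv> G Mod grp_center G"

definition AutZ :: "('a, 'b) monoid_scheme \<Rightarrow> ('a \<Rightarrow> 'a) set" where
  "AutZ G = {\<phi> \<in> iso G G. \<forall>z \<in> grp_center G. \<phi> z = z}"

(* f_phi(gZ) = phi(g)Z; as a map on cosets this is the image of the coset under phi *)
definition f_map :: "('a \<Rightarrow> 'a) \<Rightarrow> 'a set \<Rightarrow> 'a set" where
  "f_map \<phi> C = \<phi> ` C"

definition Qgrp :: "('a, 'b) monoid_scheme \<Rightarrow> ('a set \<Rightarrow> 'a set) set" where
  "Qgrp G = {f_map \<phi> | \<phi>. \<phi> \<in> AutZ G}"

definition Q_orbit :: "('a, 'b) monoid_scheme \<Rightarrow> 'a set \<Rightarrow> 'a set set" where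
  "Q_orbit G v = {f v | f. f \<in> Qgrp G}"

definition Vnz :: "('a, 'b) monoid_scheme \<Rightarrow> 'a set set" where
  "Vnz G = carrier (Vsp G) - {grp_center G}"

definition Tmap :: "nat \<Rightarrow> ('a, 'b) monoid_scheme \<Rightarrow> 'a set \<Rightarrow> 'a" where
  "Tmap p G v = (SOME g. g \<in> v) [^]\<^bsub>G\<^esub> p"

(* Scalar multiple a*v in V = the a-th power in the quotient group *)
definition smult_V :: "('a, 'b) monoid_scheme \<Rightarrow> nat \<Rightarrow> 'a set \<Rightarrow> 'a set" where
  "smult_V G a v = v [^]\<^bsub>Vsp G\<^esub> a"

(* Special symplectic basis: v_{i+1} = Z #> x i, w_{i+1} = Z #> y i for i < n;
   z \<in> Z(G) is the element identified with 1 \<in> GF(p). *)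
definition special_symplectic_basis ::
  "nat \<Rightarrow> ('a, 'b) monoid_scheme \<Rightarrow> 'a \<Rightarrow> nat \<Rightarrow> (nat \<Rightarrow> 'a) \<Rightarrow> (nat \<Rightarrow> 'a) \<Rightarrow> bool" where
  "special_symplectic_basis p G z n x y \<longleftrightarrow>
     0 < n \<and> (\<forall>i<n. x i \<in> carrier G \<and> y i \<in> carrier G) \<and>
     \<comment> \<open>basis of V over GF(p): unique expression with coefficients in {0..<p}\<close>
     bij_betw (\<lambda>(a, b). finprod (Vsp G)
                (\<lambda>i. smult_V G (a i) (grp_center G #>\<^bsub>G\<^esub> x i) \<otimes>\<^bsub>Vsp G\<^esub>
                     smult_V G (b i) (grp_center G #>\<^bsub>G\<^esub> y i)) {..<n})
       (({..<n} \<rightarrow>\<^sub>E {..<p}) \<times> ({..<n} \<rightarrow>\<^sub>E {..<p})) (carrier (Vsp G)) \<and>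
     (\<forall>i<n. grp_comm G (x i) (y i) = z) \<and>
     (\<forall>i<n. \<forall>j<n. i \<noteq> j \<longrightarrow> grp_comm G (x i) (y j) = \<one>\<^bsub>G\<^esub>) \<and>
     (\<forall>i<n. \<forall>j<n. i \<noteq> j \<longrightarrow> grp_comm G (x i) (x j) = \<one>\<^bsub>G\<^esub>) \<and>
     (\<forall>i<n. \<forall>j<n. i \<noteq> j \<longrightarrow> grp_comm G (y i) (y j) = \<one>\<^bsub>G\<^esub>) \<and>
     x 0 [^]\<^bsub>G\<^esub> p = z \<and>
     (\<forall>i<n. 0 < i \<longrightarrow> x i [^]\<^bsub>G\<^esub> p = \<one>\<^bsub>G\<^esub>) \<and>
     (\<forall>i<n. y i [^]\<^bsub>G\<^esub> p = \<one>\<^bsub>G\<^esub>)"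

end

theory Submission imports Defs begin



locale esg = group G for G (structure) +
  fixes p :: nat and z :: 'a and n :: nat and x y :: "nat \<Rightarrow> 'a"
  assumes fin: "finite (carrier G)"
    and pprime: "Factorial_Ring.prime p" and podd: "odd p"
    and Zsub: "subgroup (grp_center G) G"
    and Zpow: "\<And>c. c \<in> grp_center G \<Longrightarrow> c [^] p = \<one>"
    and Zcard: "card (grp_center G) = p"
    and comm_in: "\<And>g h. g \<in> carrier G \<Longrightarrow> h \<in> carrier G \<Longrightarrow> grp_comm G g h \<in> grp_center G"
    and zZ: "z \<in> grp_center G" and z1: "z \<noteq> \<one>"
    and basis: "special_symplectic_basis p G z n x y"
begin

abbreviation "Z \<equiv> grp_center G"
abbreviation cm where "cm g h \<equiv> grp_comm G g h"

lemma Z_carr: "c \<in> Z \<Longrightarrow> c \<in> carrier G"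
  by (simp add: grp_center_def)

lemma Z_comm: "c \<in> Z \<Longrightarrow> g \<in> carrier G \<Longrightarrow> c \<otimes> g = g \<otimes> c"
  by (simp add: grp_center_def)

lemma cm_carr[simp]: "g \<in> carrier G \<Longrightarrow> h \<in> carrier G \<Longrightarrow> cm g h \<in> carrier G"
  by (simp add: grp_comm_def)

lemma cm_Z: "g \<in> carrier G \<Longrightarrow> h \<in> carrier G \<Longrightarrow> cm g h \<in> Z"
  by (rule comm_in)

lemma cm_comm: "g \<in> carrier G \<Longrightarrow> h \<in> carrier G \<Longrightarrow> k \<in> carrier G \<Longrightarrow> cm g h \<otimes> k = k \<otimes> cm g h"
  by (simp add: Z_comm cm_Z)

lemma canc1[simp]: "a \<in> carrier G \<Longrightarrow> b \<in> carrier G \<Longrightarrow> inv a \<otimes> (a \<otimes> b) = b"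
  by (simp add: m_assoc[symmetric])
lemma canc2[simp]: "a \<in> carrier G \<Longrightarrow> b \<in> carrier G \<Longrightarrow> a \<otimes> (inv a \<otimes> b) = b"
  by (simp add: m_assoc[symmetric])

lemma Z_lcomm: "c \<in> Z \<Longrightarrow> g \<in> carrier G \<Longrightarrow> w \<in> carrier G \<Longrightarrow> g \<otimes> (c \<otimes> w) = c \<otimes> (g \<otimes> w)"
  by (metis Z_carr Z_comm m_assoc)

lemma mult_swap: "g \<in> carrier G \<Longrightarrow> h \<in> carrier G \<Longrightarrow> g \<otimes> h = cm g h \<otimes> (h \<otimes> g)"
  by (simp add: grp_comm_def m_assoc)

lemma cm_inv: "g \<in> carrier G \<Longrightarrow> h \<in> carrier G \<Longrightarrow> cm h g = inv (cm g h)"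
  by (simp add: grp_comm_def inv_mult_group m_assoc)

lemma cm_mult_left: 
  assumes g: "g \<in> carrier G" and h: "h \<in> carrier G" and u: "u \<in> carrier G"
  shows "cm (g \<otimes> h) u = cm g u \<otimes> cm h u"
proof -
  have e1: "h \<otimes> (u \<otimes> inv h) = cm h u \<otimes> u" using assms by (simp add: grp_comm_def m_assoc)
  have "cm (g \<otimes> h) u = g \<otimes> (h \<otimes> (u \<otimes> inv h)) \<otimes> inv g \<otimes> inv u"
    using assms by (simp add: grp_comm_def inv_mult_group m_assoc)
  also have "\<dots> = g \<otimes> (cm h u \<otimes> (u \<otimes> (inv g \<otimes> inv u)))" using assms by (simp add: e1 m_assoc)
  also have "\<dots> = cm h u \<otimes> (g \<otimes> (u \<otimes> (inv g \<otimes> inv u)))" using assms by (intro Z_lcomm cm_Z) auto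
  also have "\<dots> = cm h u \<otimes> cm g u" using assms by (simp add: grp_comm_def m_assoc)
  also have "\<dots> = cm g u \<otimes> cm h u" using assms cm_comm[of h u "cm g u"] by simp
  finally show ?thesis .
qed

lemma cm_mult_right: 
  assumes g: "g \<in> carrier G" and h: "h \<in> carrier G" and u: "u \<in> carrier G"
  shows "cm u (g \<otimes> h) = cm u g \<otimes> cm u h"
proof -
  have "cm u (g \<otimes> h) = inv (cm (g \<otimes> h) u)" using assms cm_inv[of "g \<otimes> h" u] by simp
  also have "\<dots> = inv (cm h u) \<otimes> inv (cm g u)" using assms by (simp add: cm_mult_left inv_mult_group)
  also have "\<dots> = cm u h \<otimes> cm u g" using assms by (simp add: cm_inv[of h u] cm_inv[of g u])
  also have "\<dots> = cm u g \<otimes> cm u h" using assms cm_comm[of u h "cm u g"] by simp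
  finally show ?thesis .
qed

lemma cm_one_left[simp]: "u \<in> carrier G \<Longrightarrow> cm \<one> u = \<one>"
  by (simp add: grp_comm_def)
lemma cm_one_right[simp]: "u \<in> carrier G \<Longrightarrow> cm u \<one> = \<one>"
  by (simp add: grp_comm_def)
lemma cm_self[simp]: "u \<in> carrier G \<Longrightarrow> cm u u = \<one>"
  by (simp add: grp_comm_def m_assoc)

lemma cm_Z_left: assumes "c \<in> Z" "u \<in> carrier G" shows "cm c u = \<one>"
proof -
  have "cm c u = u \<otimes> c \<otimes> inv c \<otimes> inv u" using assms Z_comm[of c u] by (simp add: grp_comm_def)
  then show ?thesis using assms Z_carr by (simp add: m_assoc)
qed
lemma cm_Z_right: assumes "c \<in> Z" "u \<in> carrier G" shows "cm u c = \<one>"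
  using assms cm_Z_left cm_inv by (metis Z_carr inv_one)

lemma cm_inv_left: "g \<in> carrier G \<Longrightarrow> u \<in> carrier G \<Longrightarrow> cm (inv g) u = inv (cm g u)"
  using cm_mult_left[of g "inv g" u] by (metis cm_carr cm_comm cm_one_left inv_closed inv_equality r_inv)

lemma cm_pow_left: "g \<in> carrier G \<Longrightarrow> u \<in> carrier G \<Longrightarrow> cm (g [^] (k::nat)) u = cm g u [^] k"
  by (induction k) (simp_all add: cm_mult_left)

lemma cm_pow_right: "g \<in> carrier G \<Longrightarrow> u \<in> carrier G \<Longrightarrow> cm u (g [^] (k::nat)) = cm u g [^] k"
  by (induction k) (simp_all add: cm_mult_right)

end


context esg begin

lemma p_gt1: "p > 1" using pprime prime_gt_1_nat by blast

lemma z_carr[simp]: "z \<in> carrier G" using zZ Z_carr by blast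

lemma ord_z: "ord z = p"
proof -
  have "ord z dvd p" using Zpow[OF zZ] pow_eq_id[of z] by simp
  moreover have "ord z \<noteq> 1" using ord_eq_1[of z] z1 by simp
  ultimately show ?thesis using pprime prime_nat_iff by blast
qed

lemma zpow_Z: "z [^] (k::nat) \<in> Z"
  using Zsub zZ subgroup_int_pow_closed[of Z z "int k"] by (simp add: int_pow_int)

lemma zipow_Z: "z [^] (k::int) \<in> Z"
  using Zsub zZ subgroup_int_pow_closed[of Z z k] by simp

lemma Z_pow: "c \<in> Z \<Longrightarrow> c [^] (k::nat) \<in> Z"
  using Zsub subgroup_int_pow_closed[of Z c "int k"] by (simp add: int_pow_int)

lemma zipow_eq: "z [^] (i::int) = z [^] (j::int) \<longleftrightarrow> int p dvd (j - i)"
  using int_pow_eq[of z i j] ord_z by simp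

lemma Z_eq: "Z = (\<lambda>k. z [^] k) ` {..<p}"
proof -
  have inj: "inj_on (\<lambda>k. z [^] k) {..<p}"
  proof -
    have "{..<p} = {0..ord z - 1}" using ord_z p_gt1 by auto
    then show ?thesis using ord_inj[of z] by simp
  qed
  have sub: "(\<lambda>k. z [^] k) ` {..<p} \<subseteq> Z" using zpow_Z by auto
  have "card ((\<lambda>k. z [^] k) ` {..<p}) = p" using card_image[OF inj] by simp
  moreover have "finite Z" using fin Z_carr by (meson finite_subset subsetI)
  ultimately show ?thesis using sub Zcard card_subset_eq by metis
qed

definition lg :: "'a \<Rightarrow> nat" where "lg c = (SOME k. k < p \<and> z [^] k = c)"

lemma lg: assumes "c \<in> Z" shows "lg c < p" "z [^] lg c = c"
proof -
  obtain k where "k < p" "z [^] k = c" using assms Z_eq by auto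
  then have "\<exists>k. k < p \<and> z [^] k = c" by blast
  then have "lg c < p \<and> z [^] lg c = c" unfolding lg_def by (rule someI_ex)
  then show "lg c < p" "z [^] lg c = c" by auto
qed

lemma pow_mod: assumes "u \<in> carrier G" "u [^] p = \<one>" shows "u [^] (k::nat) = u [^] (k mod p)"
proof -
  have "u [^] k = u [^] (k mod p + p * (k div p))" by (simp only: mod_mult_div_eq)
  also have "\<dots> = u [^] (k mod p) \<otimes> (u [^] p) [^] (k div p)" using assms(1) by (simp add: nat_pow_mult nat_pow_pow)
  also have "\<dots> = u [^] (k mod p)" using assms by simp
  finally show ?thesis .
qed

lemma tri_step: "Suc k * (Suc k - 1) div 2 = k * (k - 1) div 2 + k"
proof (cases k)
  case (Suc m)
  have "Suc k * k = k * (k - 1) + 2 * k" using Suc by simp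
  then show ?thesis by simp
qed simp

lemma pow_formula: assumes g: "g \<in> carrier G" and h: "h \<in> carrier G"
  shows "(g \<otimes> h) [^] (k::nat) = g [^] k \<otimes> (h [^] k \<otimes> cm h g [^] (k * (k - 1) div 2))"
proof (induction k)
  case 0 then show ?case by simp
next
  case (Suc k)
  define C where "C = cm h g"
  define t where "t = k * (k - 1) div 2"
  define A where "A = g [^] k"
  define Bk where "Bk = h [^] k"
  have CZ: "C [^] m \<in> Z" for m :: nat unfolding C_def using Z_pow cm_Z g h by blast
  have Cc: "C [^] m \<in> carrier G" for m :: nat using CZ Z_carr by blast
  have Cc0: "C \<in> carrier G" unfolding C_def using g h by simp
  have Ac: "A \<in> carrier G" "Bk \<in> carrier G" using g h by (auto simp: A_def Bk_def)
  have sw: "Bk \<otimes> g = C [^] k \<otimes> (g \<otimes> Bk)"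
    using mult_swap[of "h [^] k" g] cm_pow_left[of h g k] g h by (simp add: C_def Bk_def)
  have s2: "C [^] t \<otimes> (g \<otimes> h) = g \<otimes> (h \<otimes> C [^] t)"
    using Z_comm[OF CZ[of t], of "g \<otimes> h"] g h Cc by (simp add: m_assoc)
  have "(g \<otimes> h) [^] Suc k = (A \<otimes> (Bk \<otimes> C [^] t)) \<otimes> (g \<otimes> h)"
    using Suc by (simp add: A_def Bk_def C_def t_def)
  also have "\<dots> = A \<otimes> ((Bk \<otimes> g) \<otimes> (h \<otimes> C [^] t))"
    using g h Ac Cc by (simp add: m_assoc s2)
  also have "\<dots> = A \<otimes> (C [^] k \<otimes> ((g \<otimes> Bk) \<otimes> (h \<otimes> C [^] t)))"
    using g h Ac Cc by (simp add: sw m_assoc)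
  also have "\<dots> = C [^] k \<otimes> (A \<otimes> ((g \<otimes> Bk) \<otimes> (h \<otimes> C [^] t)))"
    using g h Ac Cc by (intro Z_lcomm CZ) auto
  also have "\<dots> = (A \<otimes> (g \<otimes> (Bk \<otimes> (h \<otimes> C [^] t)))) \<otimes> C [^] k"
    using Z_comm[OF CZ[of k], of "A \<otimes> (g \<otimes> (Bk \<otimes> (h \<otimes> C [^] t)))"] g h Ac Cc by (simp add: m_assoc)
  also have "\<dots> = (A \<otimes> g) \<otimes> ((Bk \<otimes> h) \<otimes> (C [^] t \<otimes> C [^] k))"
    using g h Ac Cc by (simp add: m_assoc)
  also have "\<dots> = g [^] Suc k \<otimes> (h [^] Suc k \<otimes> C [^] (t + k))"
    using g h Cc0 by (simp add: A_def Bk_def nat_pow_mult)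
  finally show ?case by (simp only: tri_step C_def t_def)
qed

lemma pow_hom: assumes g: "g \<in> carrier G" and h: "h \<in> carrier G"
  shows "(g \<otimes> h) [^] p = g [^] p \<otimes> h [^] p"
proof -
  have e: "p * (p - 1) div 2 = p * ((p - 1) div 2)" using podd by (simp add: div_mult_swap)
  have "cm h g [^] (p * (p - 1) div 2) = \<one>"
    unfolding e using g h Zpow[OF cm_Z[OF h g]] by (simp add: nat_pow_pow[symmetric])
  then show ?thesis using pow_formula[OF g h, of p] g h by (simp add: m_assoc)
qed

lemma pow_inv: "g \<in> carrier G \<Longrightarrow> (inv g) [^] (k::nat) = inv (g [^] k)"
  by (simp add: nat_pow_inv)

end


context esg begin

lemma B_n: "0 < n" using basis by (simp add: special_symplectic_basis_def)
lemma B_x: "i < n \<Longrightarrow> x i \<in> carrier G" using basis by (simp add: special_symplectic_basis_def)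
lemma B_y: "i < n \<Longrightarrow> y i \<in> carrier G" using basis by (simp add: special_symplectic_basis_def)
lemma B_xy: "i < n \<Longrightarrow> cm (x i) (y i) = z" using basis by (simp add: special_symplectic_basis_def)
lemma B_xy': "i < n \<Longrightarrow> j < n \<Longrightarrow> i \<noteq> j \<Longrightarrow> cm (x i) (y j) = \<one>" using basis by (simp add: special_symplectic_basis_def)
lemma B_xx: "i < n \<Longrightarrow> j < n \<Longrightarrow> i \<noteq> j \<Longrightarrow> cm (x i) (x j) = \<one>" using basis by (simp add: special_symplectic_basis_def)
lemma B_yy: "i < n \<Longrightarrow> j < n \<Longrightarrow> i \<noteq> j \<Longrightarrow> cm (y i) (y j) = \<one>" using basis by (simp add: special_symplectic_basis_def)
lemma B_x0p: "x 0 [^] p = z" using basis by (simp add: special_symplectic_basis_def)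
lemma B_xip: "i < n \<Longrightarrow> 0 < i \<Longrightarrow> x i [^] p = \<one>" using basis by (simp add: special_symplectic_basis_def)
lemma B_yip: "i < n \<Longrightarrow> y i [^] p = \<one>" using basis by (simp add: special_symplectic_basis_def)
lemma B_bij: "bij_betw (\<lambda>(a, b). finprod (Vsp G)
                (\<lambda>i. smult_V G (a i) (Z #> x i) \<otimes>\<^bsub>Vsp G\<^esub>
                     smult_V G (b i) (Z #> y i)) {..<n})
       (({..<n} \<rightarrow>\<^sub>E {..<p}) \<times> ({..<n} \<rightarrow>\<^sub>E {..<p})) (carrier (Vsp G))"
  using basis by (simp add: special_symplectic_basis_def)

lemma Znormal: "Z \<lhd> G"
proof (rule normalI[OF Zsub], intro ballI)
  fix g assume g: "g \<in> carrier G"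
  show "Z #> g = g <# Z" unfolding r_coset_def l_coset_def by (intro SUP_cong refl) (simp add: Z_comm[OF _ g])
qed

interpretation ZN: normal Z G by (rule Znormal)

lemma V_group: "group (Vsp G)" by (rule ZN.factorgroup_is_group)

lemma rcos_Zmult: "c \<in> Z \<Longrightarrow> w \<in> carrier G \<Longrightarrow> Z #> (c \<otimes> w) = Z #> w"
  using coset_mult_assoc[of Z c w] ZN.rcos_const[OF is_group, of c] Z_carr
  by (metis Zsub subgroup.subset)

lemma V_mult: "g \<in> carrier G \<Longrightarrow> h \<in> carrier G \<Longrightarrow> (Z #> g) \<otimes>\<^bsub>Vsp G\<^esub> (Z #> h) = Z #> (g \<otimes> h)"
  by (simp add: ZN.rcos_sum)

lemma V_pow: "g \<in> carrier G \<Longrightarrow> (Z #> g) [^]\<^bsub>Vsp G\<^esub> (k::nat) = Z #> (g [^] k)"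
  by (simp add: ZN.FactGroup_pow)

lemma V_carr: "v \<in> carrier (Vsp G) \<longleftrightarrow> (\<exists>g \<in> carrier G. v = Z #> g)"
  by (auto simp: carrier_FactGroup)

lemma V_in: "g \<in> carrier G \<Longrightarrow> Z #> g \<in> carrier (Vsp G)"
  by (auto simp: carrier_FactGroup)

lemma V_one: "\<one>\<^bsub>Vsp G\<^esub> = Z" by simp

lemma V_comm: "comm_group (Vsp G)"
proof (rule group.group_comm_groupI[OF V_group])
  fix a b assume "a \<in> carrier (Vsp G)" "b \<in> carrier (Vsp G)"
  then obtain g h where g: "g \<in> carrier G" "a = Z #> g" and h: "h \<in> carrier G" "b = Z #> h"
    by (auto simp: V_carr)
  have "Z #> (g \<otimes> h) = Z #> (h \<otimes> g)"
    using mult_swap[OF g(1) h(1)] rcos_Zmult[OF cm_Z[OF g(1) h(1)], of "h \<otimes> g"] g h by simp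
  then show "a \<otimes>\<^bsub>Vsp G\<^esub> b = b \<otimes>\<^bsub>Vsp G\<^esub> a" using g h V_mult by simp
qed

interpretation V: comm_group "Vsp G" by (rule V_comm)

lemma rcos_eq_mem: "g \<in> carrier G \<Longrightarrow> h \<in> carrier G \<Longrightarrow> Z #> g = Z #> h \<Longrightarrow> \<exists>c \<in> Z. g = c \<otimes> h"
  using rcos_self[OF _ Zsub, of g] by (auto simp: r_coset_def)

lemma rcos_eq_iff: "g \<in> carrier G \<Longrightarrow> h \<in> carrier G \<Longrightarrow> Z #> g = Z #> h \<longleftrightarrow> g \<otimes> inv h \<in> Z"
proof
  assume "g \<in> carrier G" "h \<in> carrier G" "Z #> g = Z #> h"
  then obtain c where "c \<in> Z" "g = c \<otimes> h" using rcos_eq_mem by blast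
  then show "g \<otimes> inv h \<in> Z" using \<open>h \<in> carrier G\<close> Z_carr by (simp add: m_assoc)
next
  assume gh: "g \<in> carrier G" "h \<in> carrier G" and c: "g \<otimes> inv h \<in> Z"
  then have "g = (g \<otimes> inv h) \<otimes> h" by (simp add: m_assoc)
  then show "Z #> g = Z #> h" using rcos_Zmult[OF c gh(2)] by simp
qed

lemma finprod_in:
  assumes "finite A" "S \<subseteq> carrier (Vsp G)" "\<one>\<^bsub>Vsp G\<^esub> \<in> S"
    "\<And>a b. a \<in> S \<Longrightarrow> b \<in> S \<Longrightarrow> a \<otimes>\<^bsub>Vsp G\<^esub> b \<in> S" "\<And>i. i \<in> A \<Longrightarrow> f i \<in> S"
  shows "finprod (Vsp G) f A \<in> S"
  using assms(1,5)
proof (induction A rule: finite_induct)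
  case empty then show ?case using assms(3) by simp
next
  case (insert a A)
  have "f \<in> A \<rightarrow> carrier (Vsp G)" "f a \<in> carrier (Vsp G)" using insert assms(2) by auto
  then show ?case using insert assms(4) by simp
qed

lemma gen:
  assumes H: "subgroup H G" "Z \<subseteq> H" "\<And>i. i < n \<Longrightarrow> x i \<in> H" "\<And>i. i < n \<Longrightarrow> y i \<in> H"
    and g: "g \<in> carrier G"
  shows "g \<in> H"
proof -
  define S where "S = {Z #> h | h. h \<in> H}"
  have Hc: "H \<subseteq> carrier G" using H(1) subgroup.subset by blast
  define F where "F = (\<lambda>(a, b). finprod (Vsp G)
                (\<lambda>i. smult_V G (a i) (Z #> x i) \<otimes>\<^bsub>Vsp G\<^esub> smult_V G (b i) (Z #> y i)) {..<n})"
  define D where "D = ({..<n} \<rightarrow>\<^sub>E {..<p}) \<times> ({..<n} \<rightarrow>\<^sub>E {..<p})"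
  have im: "F ` D = carrier (Vsp G)" using B_bij unfolding bij_betw_def F_def D_def by (rule conjunct2)
  have "Z #> g \<in> F ` D" using g V_in im by blast
  then obtain ab where ab: "ab \<in> D" and eq: "Z #> g = F ab" by (rule imageE)
  obtain a b where abe: "ab = (a, b)" by fastforce
  have "Z #> g \<in> S"
    unfolding eq abe F_def split
  proof (rule finprod_in)
    show "S \<subseteq> carrier (Vsp G)" unfolding S_def using Hc V_in by auto
    show "\<one>\<^bsub>Vsp G\<^esub> \<in> S" unfolding S_def using H(1) subgroup.one_closed
      by (metis (mono_tags, lifting) V_one coset_mult_one Zsub subgroup.subset mem_Collect_eq)
    show "a1 \<otimes>\<^bsub>Vsp G\<^esub> b1 \<in> S" if ab1: "a1 \<in> S" "b1 \<in> S" for a1 b1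
    proof -
      obtain h1 h2 where hh: "h1 \<in> H" "h2 \<in> H" "a1 = Z #> h1" "b1 = Z #> h2" using ab1[unfolded S_def] by blast
      then have "a1 \<otimes>\<^bsub>Vsp G\<^esub> b1 = Z #> (h1 \<otimes> h2)" unfolding hh(3,4) using hh(1,2) Hc by (intro V_mult) auto
      moreover have "h1 \<otimes> h2 \<in> H" by (rule subgroup.m_closed[OF H(1) hh(1,2)])
      ultimately show ?thesis unfolding S_def by blast
    qed
    show "smult_V G (a i) (Z #> x i) \<otimes>\<^bsub>Vsp G\<^esub> smult_V G (b i) (Z #> y i) \<in> S" if "i \<in> {..<n}" for i
    proof -
      have "x i \<in> H" "y i \<in> H" using that H by auto
      then have "x i [^] a i \<otimes> y i [^] b i \<in> H"
        using H(1) by (simp add: subgroup.m_closed subgroup_int_pow_closed[of H, where k="int _", simplified int_pow_int])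
      moreover have "smult_V G (a i) (Z #> x i) \<otimes>\<^bsub>Vsp G\<^esub> smult_V G (b i) (Z #> y i) = Z #> (x i [^] a i \<otimes> y i [^] b i)"
        using that B_x B_y by (simp add: smult_V_def V_pow ZN.rcos_sum)
      ultimately show ?thesis unfolding S_def by blast
    qed
  qed simp
  then obtain h where h: "h \<in> H" "Z #> g = Z #> h" unfolding S_def by blast
  then obtain c where c: "c \<in> Z" "g = c \<otimes> h" using rcos_eq_mem g Hc by blast
  have "c \<in> H" using c H(2) by blast
  then show ?thesis unfolding c(2) by (rule subgroup.m_closed[OF H(1) _ h(1)])
qed

lemma central_of_gens:
  assumes g: "g \<in> carrier G" and "\<And>i. i < n \<Longrightarrow> cm g (x i) = \<one>" "\<And>i. i < n \<Longrightarrow> cm g (y i) = \<one>"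
  shows "g \<in> Z"
proof -
  define H where "H = {h \<in> carrier G. cm g h = \<one>}"
  have sH: "subgroup H G"
  proof (rule subgroupI)
    show "H \<subseteq> carrier G" unfolding H_def by auto
    show "H \<noteq> {}" unfolding H_def using g by auto
    show "inv a \<in> H" if "a \<in> H" for a
    proof -
      have a: "a \<in> carrier G" "cm g a = \<one>" using that unfolding H_def by auto
      have "cm g (inv a) = inv (cm (inv a) g)" using a g cm_inv[of "inv a" g] by simp
      also have "\<dots> = cm a g" using a g by (simp add: cm_inv_left)
      also have "\<dots> = \<one>" using a g cm_inv[of g a] by simp
      finally show ?thesis using a unfolding H_def by simp
    qed
    show "a \<otimes> b \<in> H" if "a \<in> H" "b \<in> H" for a b using that g unfolding H_def
      by (simp add: cm_mult_right)
  qed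
  have "carrier G \<subseteq> H"
    using gen[OF sH] assms cm_Z_right[of _ g] B_x B_y Z_carr unfolding H_def by blast
  then have "\<forall>h \<in> carrier G. g \<otimes> h = h \<otimes> g"
  proof (intro ballI)
    fix h assume h: "h \<in> carrier G"
    then have "cm g h = \<one>" using \<open>carrier G \<subseteq> H\<close> unfolding H_def by blast
    then show "g \<otimes> h = h \<otimes> g" using mult_swap[OF g h] h g by simp
  qed
  then show ?thesis using g unfolding grp_center_def by auto
qed

lemma Tid: "g \<in> carrier G \<Longrightarrow> g [^] p = cm g (y 0)"
proof -
  have y0: "y 0 \<in> carrier G" using B_y B_n by blast
  define E where "E = {g \<in> carrier G. g [^] p = cm g (y 0)}"
  have sE: "subgroup E G"
  proof (rule subgroupI)
    show "E \<subseteq> carrier G" unfolding E_def by auto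
    show "E \<noteq> {}" unfolding E_def using y0 by (auto intro!: exI[of _ \<one>])
    show "inv a \<in> E" if "a \<in> E" for a using that y0 unfolding E_def
      by (simp add: pow_inv cm_inv_left)
    show "a \<otimes> b \<in> E" if "a \<in> E" "b \<in> E" for a b using that y0 unfolding E_def
      by (simp add: pow_hom cm_mult_left)
  qed
  have "Z \<subseteq> E" unfolding E_def using Zpow cm_Z_left y0 Z_carr by auto
  moreover have "x i \<in> E" if "i < n" for i
  proof (cases "i = 0")
    case True then show ?thesis using B_x0p B_xy that B_x unfolding E_def by auto
  next
    case False then show ?thesis using B_xip B_xy' that B_x B_n unfolding E_def by auto
  qed
  moreover have "y i \<in> E" if "i < n" for i
  proof (cases "i = 0")
    case True then show ?thesis using B_yip that B_y unfolding E_def by auto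
  next
    case False then show ?thesis using B_yip B_yy that B_y B_n unfolding E_def by auto
  qed
  ultimately show "g \<in> carrier G \<Longrightarrow> g [^] p = cm g (y 0)"
    using gen[OF sE] unfolding E_def by blast
qed

lemma powp_Z: "g \<in> carrier G \<Longrightarrow> g [^] p \<in> Z"
  using Tid cm_Z B_y B_n by auto

lemma Tmap_eq: "g \<in> carrier G \<Longrightarrow> Tmap p G (Z #> g) = g [^] p"
proof -
  assume g: "g \<in> carrier G"
  define g' where "g' = (SOME g'. g' \<in> Z #> g)"
  have "g' \<in> Z #> g" unfolding g'_def using rcos_self[OF g Zsub] by (rule someI)
  then obtain c where c: "c \<in> Z" "g' = c \<otimes> g" by (auto simp: r_coset_def)
  have "g' [^] p = c [^] p \<otimes> g [^] p"
    using c g Z_comm[OF c(1) g] Z_carr pow_mult_distrib[of c g p] by simp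
  also have "\<dots> = g [^] p" using Zpow[OF c(1)] g by simp
  finally show ?thesis unfolding Tmap_def g'_def[symmetric] .
qed

end


context esg begin

interpretation ZN: normal Z G by (rule Znormal)

lemma AutZ_iff: "\<phi> \<in> AutZ G \<longleftrightarrow> \<phi> \<in> iso G G \<and> (\<forall>c \<in> Z. \<phi> c = c)"
  by (simp add: AutZ_def)

lemma aut_hom: "\<phi> \<in> AutZ G \<Longrightarrow> \<phi> \<in> hom G G" by (simp add: AutZ_def iso_def)
lemma aut_carr: "\<phi> \<in> AutZ G \<Longrightarrow> g \<in> carrier G \<Longrightarrow> \<phi> g \<in> carrier G"
  by (rule hom_in_carrier[OF aut_hom])
lemma aut_mult: "\<phi> \<in> AutZ G \<Longrightarrow> g \<in> carrier G \<Longrightarrow> h \<in> carrier G \<Longrightarrow> \<phi> (g \<otimes> h) = \<phi> g \<otimes> \<phi> h"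
  using aut_hom by (simp add: hom_mult)
lemma aut_fix: "\<phi> \<in> AutZ G \<Longrightarrow> c \<in> Z \<Longrightarrow> \<phi> c = c" by (simp add: AutZ_def)
lemma aut_pow: "\<phi> \<in> AutZ G \<Longrightarrow> g \<in> carrier G \<Longrightarrow> \<phi> (g [^] (k::nat)) = \<phi> g [^] k"
  by (rule hom_nat_pow[OF aut_hom _ is_group is_group])
lemma aut_gh: "\<phi> \<in> AutZ G \<Longrightarrow> group_hom G G \<phi>"
  by (simp add: group_hom_def group_hom_axioms_def aut_hom is_group)
lemma aut_inv: "\<phi> \<in> AutZ G \<Longrightarrow> g \<in> carrier G \<Longrightarrow> \<phi> (inv g) = inv (\<phi> g)"
  by (rule group_hom.hom_inv[OF aut_gh])
lemma aut_surj: "\<phi> \<in> AutZ G \<Longrightarrow> \<phi> ` carrier G = carrier G"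
  by (simp add: AutZ_def iso_iff)
lemma aut_cm: "\<phi> \<in> AutZ G \<Longrightarrow> g \<in> carrier G \<Longrightarrow> h \<in> carrier G \<Longrightarrow> \<phi> (cm g h) = cm (\<phi> g) (\<phi> h)"
  by (simp add: grp_comm_def aut_mult aut_inv aut_carr)

lemma aut_fmap: assumes "\<phi> \<in> AutZ G" "g \<in> carrier G" shows "f_map \<phi> (Z #> g) = Z #> \<phi> g"
proof -
  have "f_map \<phi> (Z #> g) = (\<Union>c\<in>Z. {\<phi> (c \<otimes> g)})" unfolding f_map_def r_coset_def by auto
  also have "\<dots> = (\<Union>c\<in>Z. {c \<otimes> \<phi> g})"
    using assms by (intro SUP_cong refl) (simp add: aut_mult aut_fix Z_carr)
  finally show ?thesis unfolding r_coset_def .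
qed

lemma aut_id: "(\<lambda>g. g) \<in> AutZ G" by (simp add: AutZ_def iso_set_refl)

lemma aut_comp: "\<phi> \<in> AutZ G \<Longrightarrow> \<psi> \<in> AutZ G \<Longrightarrow> \<phi> \<circ> \<psi> \<in> AutZ G"
  by (auto simp: AutZ_def iso_set_trans)

lemma aut_invf: assumes "\<phi> \<in> AutZ G" shows "inv_into (carrier G) \<phi> \<in> AutZ G"
proof -
  have iso: "\<phi> \<in> iso G G" using assms by (simp add: AutZ_def)
  have inj: "inj_on \<phi> (carrier G)" using iso by (simp add: iso_iff)
  have "inv_into (carrier G) \<phi> c = c" if "c \<in> Z" for c
    using that assms inj Z_carr by (metis aut_fix inv_into_f_f)
  then show ?thesis using iso_set_sym[OF iso] by (simp add: AutZ_def)
qed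

definition rel :: "'a set \<Rightarrow> 'a set \<Rightarrow> bool" where
  "rel v w \<longleftrightarrow> (\<exists>\<phi> \<in> AutZ G. f_map \<phi> v = w)"

lemma Q_orbit_rel: "Q_orbit G v = {w. rel v w}"
  by (auto simp: Q_orbit_def Qgrp_def rel_def)

lemma rel_refl: "rel v v"
  unfolding rel_def using aut_id by (auto simp: f_map_def intro!: bexI[of _ "\<lambda>g. g"])

lemma rel_trans: "rel u v \<Longrightarrow> rel v w \<Longrightarrow> rel u w"
  unfolding rel_def f_map_def by (metis aut_comp image_comp)

lemma rel_sym: assumes "v \<subseteq> carrier G" "rel v w" shows "rel w v"
proof -
  obtain \<phi> where \<phi>: "\<phi> \<in> AutZ G" "\<phi> ` v = w" using assms unfolding rel_def f_map_def by blast
  have inj: "inj_on \<phi> (carrier G)" using \<phi> by (simp add: AutZ_def iso_iff)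
  have "inv_into (carrier G) \<phi> ` w = v"
    using \<phi> inj assms(1) by (metis inv_into_image_cancel)
  then show ?thesis unfolding rel_def f_map_def using aut_invf[OF \<phi>(1)] by blast
qed

lemma rel_coset_sym: "g \<in> carrier G \<Longrightarrow> rel (Z #> g) w \<Longrightarrow> rel w (Z #> g)"
  by (rule rel_sym[OF r_coset_subset_G[OF ZN.subset]])

lemma orbit_eq: "g \<in> carrier G \<Longrightarrow> rel (Z #> g) w \<Longrightarrow> Q_orbit G (Z #> g) = Q_orbit G w"
  unfolding Q_orbit_rel using rel_trans rel_coset_sym by blast

lemma aut_T: "\<phi> \<in> AutZ G \<Longrightarrow> g \<in> carrier G \<Longrightarrow> (\<phi> g) [^] p = g [^] p"
  by (metis aut_fix aut_pow powp_Z)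

lemma cm_inv_right: "g \<in> carrier G \<Longrightarrow> u \<in> carrier G \<Longrightarrow> cm u (inv g) = inv (cm u g)"
proof -
  assume a: "g \<in> carrier G" "u \<in> carrier G"
  have "cm u (inv g) = inv (cm (inv g) u)" using a cm_inv[of "inv g" u] by simp
  also have "\<dots> = inv (inv (cm g u))" using a by (simp add: cm_inv_left)
  also have "\<dots> = inv (cm u g)" using a cm_inv[of g u] by simp
  finally show ?thesis .
qed

lemma aut_y0: assumes \<phi>: "\<phi> \<in> AutZ G" shows "Z #> \<phi> (y 0) = Z #> y 0"
proof -
  have y0: "y 0 \<in> carrier G" using B_y B_n by blast
  have py: "\<phi> (y 0) \<in> carrier G" using aut_carr[OF \<phi> y0] .
  define d where "d = \<phi> (y 0) \<otimes> inv (y 0)"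
  have dc: "d \<in> carrier G" unfolding d_def using py y0 by simp
  have "cm h d = \<one>" if h: "h \<in> carrier G" for h
  proof -
    obtain k where k: "k \<in> carrier G" "h = \<phi> k" using h aut_surj[OF \<phi>] by blast
    have "cm h (\<phi> (y 0)) = \<phi> (cm k (y 0))" using k aut_cm[OF \<phi> k(1) y0] by simp
    also have "\<dots> = \<phi> (k [^] p)" using Tid k by simp
    also have "\<dots> = k [^] p" using aut_fix[OF \<phi> powp_Z[OF k(1)]] .
    also have "\<dots> = h [^] p" using aut_T[OF \<phi> k(1)] k by simp
    also have "\<dots> = cm h (y 0)" using Tid h by simp
    finally have e: "cm h (\<phi> (y 0)) = cm h (y 0)" .
    have "cm h d = cm h (\<phi> (y 0)) \<otimes> cm h (inv (y 0))" unfolding d_def using h py y0 by (simp add: cm_mult_right)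
    also have "\<dots> = \<one>" using e h y0 by (simp add: cm_inv_right)
    finally show ?thesis .
  qed
  then have "d \<in> Z" using central_of_gens[OF dc] B_x B_y cm_inv
    by (metis (no_types, lifting) dc grp_center_def inv_one mem_Collect_eq mult_swap r_one cm_carr m_closed)
  then show ?thesis using rcos_eq_iff[OF py y0] d_def by simp
qed

lemma aut_span: assumes \<phi>: "\<phi> \<in> AutZ G" shows "f_map \<phi> (smult_V G k (Z #> y 0)) = smult_V G k (Z #> y 0)"
proof -
  have y0: "y 0 \<in> carrier G" using B_y B_n by blast
  have "f_map \<phi> (smult_V G k (Z #> y 0)) = Z #> \<phi> (y 0) [^] k"
    using y0 \<phi> by (simp add: smult_V_def V_pow aut_fmap aut_pow)
  also have "\<dots> = (Z #> \<phi> (y 0)) [^]\<^bsub>Vsp G\<^esub> k" using aut_carr[OF \<phi> y0] by (simp add: V_pow)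
  also have "\<dots> = smult_V G k (Z #> y 0)" using aut_y0[OF \<phi>] by (simp add: smult_V_def)
  finally show ?thesis .
qed

lemma aut_Tmap: assumes \<phi>: "\<phi> \<in> AutZ G" and g: "g \<in> carrier G"
  shows "Tmap p G (f_map \<phi> (Z #> g)) = Tmap p G (Z #> g)"
  using aut_fmap[OF \<phi> g] Tmap_eq aut_carr[OF \<phi> g] g aut_T[OF \<phi> g] by simp

end


context esg begin

interpretation ZN: normal Z G by (rule Znormal)

definition h2 :: int where "h2 = int ((p + 1) div 2)"
lemma h2: "2 * h2 = int p + 1"
proof -
  have "2 * ((p + 1) div 2) = p + 1" using podd by simp
  then have "int (2 * ((p + 1) div 2)) = int (p + 1)" by (rule arg_cong)
  then show ?thesis unfolding h2_def by simp
qed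

definition mm :: "'a \<Rightarrow> 'a \<Rightarrow> int" where "mm u g = int (lg (cm g u))"

definition tv :: "'a \<Rightarrow> int \<Rightarrow> 'a \<Rightarrow> 'a" where
  "tv u c g = g \<otimes> u [^] (c * mm u g) \<otimes> z [^] (- (c * (mm u g)^2 * h2))"

lemma zint: "z [^] (int k) = z [^] k" by (simp add: int_pow_int)

lemma mm: "g \<in> carrier G \<Longrightarrow> u \<in> carrier G \<Longrightarrow> z [^] mm u g = cm g u"
  unfolding mm_def using lg cm_Z by (simp add: zint)

lemma lg_one: "lg \<one> = 0"
proof -
  have "\<one> \<in> Z" using Zsub subgroup.one_closed by blast
  then have "z [^] lg \<one> = \<one>" "lg \<one> < p" using lg by auto
  then show ?thesis using pow_eq_id[of z] ord_z by (auto dest: dvd_imp_le)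
qed

lemma mm_Z: "c \<in> Z \<Longrightarrow> u \<in> carrier G \<Longrightarrow> mm u c = 0"
  unfolding mm_def by (simp add: cm_Z_left lg_one)

lemma mm_mult: assumes "g \<in> carrier G" "h \<in> carrier G" "u \<in> carrier G"
  shows "int p dvd (mm u (g \<otimes> h) - mm u g - mm u h)"
proof -
  have "z [^] mm u (g \<otimes> h) = z [^] (mm u g + mm u h)"
    using assms by (simp add: mm cm_mult_left int_pow_mult)
  then show ?thesis using zipow_eq
    by (metis diff_diff_eq dvd_minus_iff minus_diff_eq)
qed

lemma upow_cong: assumes "u \<in> carrier G" "u [^] p = \<one>" "int p dvd (j - i)"
  shows "u [^] (i::int) = u [^] j"
proof -
  have "ord u dvd p" using assms pow_eq_id by blast
  then have "int (ord u) dvd int p" by simp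
  then have "int (ord u) dvd (j - i)" using assms(3) by (rule dvd_trans)
  then show ?thesis using int_pow_eq[OF assms(1)] by blast
qed

lemma cm_ipow_left: assumes "g \<in> carrier G" "u \<in> carrier G"
  shows "cm (g [^] (i::int)) u = cm g u [^] i"
proof (cases "i \<ge> 0")
  case True
  then have "i = int (nat i)" by simp
  then obtain k where "i = int k" by blast
  then show ?thesis using assms by (simp add: int_pow_int cm_pow_left)
next
  case False
  then have "i = - int (nat (- i))" by simp
  then obtain k where k: "i = - int k" by blast
  then show ?thesis using assms
    by (simp add: int_pow_neg int_pow_int cm_inv_left cm_pow_left)
qed

lemma ipow_Z: "c \<in> Z \<Longrightarrow> c [^] (i::int) \<in> Z"
  using Zsub subgroup_int_pow_closed by blast

lemma tv_carr: "u \<in> carrier G \<Longrightarrow> g \<in> carrier G \<Longrightarrow> tv u c g \<in> carrier G"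
  unfolding tv_def by simp

lemma rearr:
  assumes c: "g \<in> carrier G" "h \<in> carrier G" "U1 \<in> carrier G" "U2 \<in> carrier G"
    and zz: "K \<in> Z" "Z1 \<in> Z" "Z2 \<in> Z" and sw: "U1 \<otimes> h = K \<otimes> (h \<otimes> U1)"
  shows "(g \<otimes> U1 \<otimes> Z1) \<otimes> (h \<otimes> U2 \<otimes> Z2) = (g \<otimes> h) \<otimes> (U1 \<otimes> U2) \<otimes> (K \<otimes> Z1 \<otimes> Z2)"
proof -
  have zc: "K \<in> carrier G" "Z1 \<in> carrier G" "Z2 \<in> carrier G" using zz Z_carr by auto
  have e1: "Z1 \<otimes> (h \<otimes> (U2 \<otimes> Z2)) = h \<otimes> (U2 \<otimes> (Z2 \<otimes> Z1))"
    using Z_comm[OF zz(2), of "h \<otimes> (U2 \<otimes> Z2)"] c zc by (simp add: m_assoc)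
  have "(g \<otimes> U1 \<otimes> Z1) \<otimes> (h \<otimes> U2 \<otimes> Z2) = g \<otimes> (U1 \<otimes> (Z1 \<otimes> (h \<otimes> (U2 \<otimes> Z2))))"
    using c zc by (simp add: m_assoc)
  also have "\<dots> = g \<otimes> ((U1 \<otimes> h) \<otimes> (U2 \<otimes> (Z2 \<otimes> Z1)))"
    unfolding e1 using c zc by (simp add: m_assoc)
  also have "\<dots> = g \<otimes> (K \<otimes> (h \<otimes> (U1 \<otimes> (U2 \<otimes> (Z2 \<otimes> Z1)))))"
    unfolding sw using c zc by (simp add: m_assoc)
  also have "\<dots> = K \<otimes> (g \<otimes> (h \<otimes> (U1 \<otimes> (U2 \<otimes> (Z2 \<otimes> Z1)))))"
    using c zc by (intro Z_lcomm zz) auto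
  also have "\<dots> = (g \<otimes> (h \<otimes> (U1 \<otimes> (U2 \<otimes> (Z2 \<otimes> Z1))))) \<otimes> K"
    using c zc by (intro Z_comm zz) auto
  also have "\<dots> = (g \<otimes> h) \<otimes> (U1 \<otimes> U2) \<otimes> ((Z2 \<otimes> Z1) \<otimes> K)"
    using c zc by (simp add: m_assoc)
  also have "(Z2 \<otimes> Z1) \<otimes> K = K \<otimes> Z1 \<otimes> Z2"
    using c zc Z_comm[OF zz(2) zc(3)] Z_comm[OF zz(1), of "Z1 \<otimes> Z2"] by (simp add: m_assoc)
  finally show ?thesis .
qed

lemma tri_arith:
  fixes a b M k c q h :: int
  assumes "M = a + b + q * k" "2 * h = q + 1"
  shows "(- (b * (c * a)) + - (c * a^2 * h) + - (c * b^2 * h)) - (- (c * M^2 * h))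
         = q * (c * a * b + c * h * (2 * (a + b) * k + q * k^2))"
proof -
  have "c * M^2 * h = c * h * (a^2 + b^2 + 2*a*b + q * (2 * (a + b) * k + q * k^2))"
    unfolding assms(1) by (simp add: power2_eq_square algebra_simps)
  then have "(- (b * (c * a)) + - (c * a^2 * h) + - (c * b^2 * h)) - (- (c * M^2 * h))
      = c * a * b * (2 * h) - c * a * b + q * (c * h * (2 * (a + b) * k + q * k^2))"
    by (simp add: algebra_simps power2_eq_square)
  then show ?thesis unfolding assms(2) by (simp add: algebra_simps)
qed

lemma tv_hom: assumes u: "u \<in> carrier G" "u [^] p = \<one>" and g: "g \<in> carrier G" and h: "h \<in> carrier G"
  shows "tv u c (g \<otimes> h) = tv u c g \<otimes> tv u c h"
proof -
  define a where "a = mm u g"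
  define b where "b = mm u h"
  define M where "M = mm u (g \<otimes> h)"
  define U1 where "U1 = u [^] (c * a)"
  define U2 where "U2 = u [^] (c * b)"
  define Z1 where "Z1 = z [^] (- (c * a^2 * h2))"
  define Z2 where "Z2 = z [^] (- (c * b^2 * h2))"
  define K where "K = z [^] (- (b * (c * a)))"
  have cc: "U1 \<in> carrier G" "U2 \<in> carrier G" unfolding U1_def U2_def using u by auto
  have zz: "K \<in> Z" "Z1 \<in> Z" "Z2 \<in> Z" unfolding K_def Z1_def Z2_def using ipow_Z zZ by auto
  have "cm U1 h = cm u h [^] (c * a)" unfolding U1_def using u h by (simp add: cm_ipow_left)
  also have "cm u h = inv (z [^] b)" using cm_inv[OF h u(1)] mm[OF h u(1)] b_def by simp
  also have "inv (z [^] b) [^] (c * a) = K" unfolding K_def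
    by (simp add: int_pow_inv int_pow_pow int_pow_neg)
  finally have swK: "U1 \<otimes> h = K \<otimes> (h \<otimes> U1)" using mult_swap[OF _ h] cc by simp
  have lhs: "tv u c g \<otimes> tv u c h = (g \<otimes> h) \<otimes> (U1 \<otimes> U2) \<otimes> (K \<otimes> Z1 \<otimes> Z2)"
    unfolding tv_def a_def[symmetric] b_def[symmetric] U1_def[symmetric] U2_def[symmetric]
      Z1_def[symmetric] Z2_def[symmetric]
    by (rule rearr[OF g h cc zz swK])
  obtain k where k: "M = a + b + int p * k"
    using mm_mult[OF g h u(1)] unfolding M_def a_def b_def
    by (metis add.commute diff_diff_eq dvdE eq_diff_eq)
  have "U1 \<otimes> U2 = u [^] (c * M)"
    unfolding U1_def U2_def using u
    by (simp add: int_pow_mult[symmetric] distrib_left[symmetric] k algebra_simps)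
      (rule upow_cong[OF u], simp add: algebra_simps)
  moreover have "K \<otimes> Z1 \<otimes> Z2 = z [^] (- (c * M^2 * h2))"
  proof -
    have "K \<otimes> Z1 \<otimes> Z2 = z [^] ((- (b * (c * a)) + - (c * a^2 * h2) + - (c * b^2 * h2)))"
      unfolding K_def Z1_def Z2_def by (simp only: int_pow_mult[OF z_carr, symmetric])
    also have "\<dots> = z [^] (- (c * M^2 * h2))"
      unfolding zipow_eq using tri_arith[OF k h2, of c]
      by (metis dvd_minus_iff dvd_triv_left minus_diff_eq)
    finally show ?thesis .
  qed
  ultimately show ?thesis using lhs unfolding tv_def M_def by simp
qed

lemma tv_mm: assumes u: "u \<in> carrier G" and g: "g \<in> carrier G"
  shows "mm u (tv u c g) = mm u g"
proof -
  have "cm (tv u c g) u = cm g u"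
    unfolding tv_def using u g
    by (simp add: cm_mult_left cm_ipow_left cm_Z_left[OF zZ])
  then show ?thesis unfolding mm_def by simp
qed

lemma tv_inv: assumes u: "u \<in> carrier G" "u [^] p = \<one>" and g: "g \<in> carrier G"
  shows "tv u (- c) (tv u c g) = g"
proof -
  define m where "m = mm u g"
  have "tv u (- c) (tv u c g) = g \<otimes> u [^] (c * m) \<otimes> z [^] (- (c * m^2 * h2)) \<otimes> u [^] (- c * m)
      \<otimes> z [^] (- (- c * m^2 * h2))"
    unfolding tv_def[of u "- c"] tv_mm[OF u(1) g] m_def[symmetric] unfolding tv_def m_def by simp
  also have "\<dots> = g \<otimes> (u [^] (c * m) \<otimes> u [^] (- c * m)) \<otimes> (z [^] (- (c * m^2 * h2)) \<otimes> z [^] (- (- c * m^2 * h2)))"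
    using g u Z_comm[OF ipow_Z[OF zZ], of "u [^] (- c * m)"] by (simp add: m_assoc)
  also have "\<dots> = g" using g u by (simp add: int_pow_mult[symmetric])
  finally show ?thesis .
qed

lemma tv_Z: "u \<in> carrier G \<Longrightarrow> c0 \<in> Z \<Longrightarrow> tv u c c0 = c0"
  unfolding tv_def using Z_carr by (simp add: mm_Z)

lemma tv_aut: assumes u: "u \<in> carrier G" "u [^] p = \<one>" shows "tv u c \<in> AutZ G"
proof -
  have hom: "tv u c \<in> hom G G" unfolding hom_def using tv_carr[OF u(1)] tv_hom[OF u] by auto
  have "bij_betw (tv u c) (carrier G) (carrier G)"
    by (rule bij_betw_byWitness[where f'="tv u (- c)"])
      (use tv_inv[OF u] tv_inv[OF u, of _ "- c"] tv_carr[OF u(1)] in auto)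
  then show ?thesis using hom tv_Z[OF u(1)] by (simp add: AutZ_def iso_def)
qed

lemma tv_coset: assumes u: "u \<in> carrier G" and g: "g \<in> carrier G"
  shows "Z #> tv u c g = Z #> (g \<otimes> u [^] (c * mm u g))"
proof -
  have "tv u c g = z [^] (- (c * (mm u g)^2 * h2)) \<otimes> (g \<otimes> u [^] (c * mm u g))"
    unfolding tv_def using u g Z_comm[OF ipow_Z[OF zZ]] by simp
  then show ?thesis using rcos_Zmult[OF ipow_Z[OF zZ]] u g by simp
qed

end


context esg begin

interpretation ZN: normal Z G by (rule Znormal)

lemma y0c: "y 0 \<in> carrier G" using B_y B_n by blast
lemma x0c: "x 0 \<in> carrier G" using B_x B_n by blast

lemma core: assumes g: "g \<in> carrier G" and h: "h \<in> carrier G" and pe: "g [^] p = h [^] p"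
  and ne: "cm g h \<noteq> \<one>"
  shows "rel (Z #> g) (Z #> h)"
proof -
  define u where "u = inv g \<otimes> h"
  have uc: "u \<in> carrier G" unfolding u_def using g h by simp
  have up: "u [^] p = \<one>" unfolding u_def using g h pe by (simp add: pow_hom pow_inv)
  have "cm g u = cm g h" unfolding u_def using g h
    by (simp add: cm_mult_right cm_inv_right)
  then have zl: "z [^] mm u g = cm g h" using mm[OF g uc] by simp
  define l where "l = lg (cm g h)"
  have lm: "mm u g = int l" unfolding mm_def l_def using \<open>cm g u = cm g h\<close> by simp
  have lp: "l < p" unfolding l_def using lg cm_Z[OF g h] by blast
  have zl': "z [^] l = cm g h" using zl lm zint by simp
  have l0: "l \<noteq> 0" using zl' ne by (intro notI) simp
  have "\<not> p dvd l" using lp l0 by (auto dest: dvd_imp_le)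
  then have "coprime p l" using pprime prime_imp_coprime by blast
  then have gcd1: "gcd l p = 1" by (simp add: coprime_iff_gcd_eq_1 gcd.commute)
  obtain a b where ab: "l * a = p * b + gcd l p" using bezout_nat[of l p] l0 by blast
  define c where "c = int a"
  have "int p dvd (1 - c * int l)"
  proof -
    have "int l * int a = int p * int b + 1" using ab gcd1 by (metis of_nat_1 of_nat_add of_nat_mult)
    then have "1 - c * int l = int p * (- int b)" unfolding c_def by (simp add: algebra_simps)
    then show ?thesis by simp
  qed
  then have "u [^] (c * mm u g) = u" using upow_cong[OF uc up, of 1 "c * mm u g"] lm uc by simp
  then have "Z #> tv u c g = Z #> h" using tv_coset[OF uc g, of c] g h unfolding u_def
    by (simp add: m_assoc[symmetric])
  then show ?thesis unfolding rel_def using tv_aut[OF uc up, of c] aut_fmap[OF tv_aut[OF uc up] g] by metis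
qed

lemma two_step: assumes g: "g \<in> carrier G" and h: "h \<in> carrier G" and k: "k \<in> carrier G"
  and pe: "g [^] p = k [^] p" "h [^] p = k [^] p" and ne: "cm g k \<noteq> \<one>" "cm h k \<noteq> \<one>"
  shows "rel (Z #> g) (Z #> h)"
proof -
  have "cm k h \<noteq> \<one>" using cm_inv[OF h k] ne(2) by (metis inv_inv cm_carr h k inv_one)
  then show ?thesis using core[OF g k pe(1) ne(1)] core[OF k h _ ] pe rel_trans by metis
qed

lemma cm_sym1: "g \<in> carrier G \<Longrightarrow> h \<in> carrier G \<Longrightarrow> cm g h = \<one> \<Longrightarrow> cm h g = \<one>"
  using cm_inv[of g h] by simp

lemma relT: assumes g: "g \<in> carrier G" and h: "h \<in> carrier G" and pe: "g [^] p = h [^] p"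
  and ne: "g [^] p \<noteq> \<one>"
  shows "rel (Z #> g) (Z #> h)"
proof (cases "cm g h = \<one>")
  case False then show ?thesis using core[OF g h pe] by blast
next
  case True
  define k where "k = g \<otimes> y 0"
  have kc: "k \<in> carrier G" unfolding k_def using g y0c by simp
  have kp: "k [^] p = g [^] p" unfolding k_def using g y0c B_yip B_n by (simp add: pow_hom)
  have c1: "cm g k = g [^] p" unfolding k_def using g y0c by (simp add: cm_mult_right Tid)
  have c2: "cm h k = h [^] p" unfolding k_def using g h y0c cm_sym1[OF g h True]
    by (simp add: cm_mult_right Tid)
  show ?thesis
    by (rule two_step[OF g h kc]) (use c1 c2 kp pe ne in auto)
qed

lemma spanlem: assumes g: "g \<in> carrier G"
  and hx: "\<And>i. i < n \<Longrightarrow> 0 < i \<Longrightarrow> cm g (x i) = \<one>" and hy: "\<And>i. i < n \<Longrightarrow> cm g (y i) = \<one>"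
  shows "\<exists>k. Z #> g = smult_V G k (Z #> y 0)"
proof -
  define m where "m = lg (cm g (x 0))"
  have zm: "z [^] m = cm g (x 0)" unfolding m_def using lg cm_Z[OF g x0c] by blast
  define k where "k = g \<otimes> y 0 [^] m"
  have kc: "k \<in> carrier G" unfolding k_def using g y0c by simp
  have cy0: "cm (y 0 [^] m) w = cm (y 0) w [^] m" if "w \<in> carrier G" for w
    using cm_pow_left[OF y0c that] .
  have "k \<in> Z"
  proof (rule central_of_gens[OF kc])
    fix i assume i: "i < n"
    show "cm k (x i) = \<one>"
    proof (cases "i = 0")
      case True
      have "cm (y 0) (x 0) = inv z" using cm_inv[OF x0c y0c] B_xy B_n by simp
      then have "cm (y 0 [^] m) (x 0) = inv (z [^] m)" using cy0[OF x0c] by (simp add: nat_pow_inv)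
      then show ?thesis unfolding k_def using True g y0c x0c zm by (simp add: cm_mult_left)
    next
      case False
      have "cm (y 0) (x i) = \<one>" using cm_inv[OF B_x[OF i] y0c] B_xy'[OF i B_n] False by simp
      then show ?thesis unfolding k_def using False g y0c B_x[OF i] hx[OF i] cy0[OF B_x[OF i]]
        by (simp add: cm_mult_left)
    qed
  next
    fix i assume i: "i < n"
    have "cm (y 0) (y i) = \<one>"
      by (cases "i = 0") (use B_yy[OF B_n i] y0c in auto)
    then show "cm k (y i) = \<one>" unfolding k_def using g y0c B_y[OF i] hy[OF i] cy0[OF B_y[OF i]]
      by (simp add: cm_mult_left)
  qed
  have ge: "g = k \<otimes> y 0 [^] ((p - 1) * m)"
  proof -
    have "y 0 [^] m \<otimes> y 0 [^] ((p - 1) * m) = y 0 [^] (p * m)"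
    proof -
      have "m + (p - 1) * m = p * m" using p_gt1 by (cases p) auto
      then show ?thesis using y0c by (simp add: nat_pow_mult)
    qed
    also have "\<dots> = \<one>" using y0c B_yip[OF B_n] by (simp add: nat_pow_pow[symmetric])
    finally show ?thesis unfolding k_def using g y0c by (simp add: m_assoc)
  qed
  have "Z #> g = Z #> y 0 [^] ((p - 1) * m)" unfolding ge using rcos_Zmult[OF \<open>k \<in> Z\<close>] y0c by simp
  then show ?thesis using V_pow[OF y0c] unfolding smult_V_def by metis
qed

lemma radical: assumes g: "g \<in> carrier G" and ns: "\<forall>k. Z #> g \<noteq> smult_V G k (Z #> y 0)"
  shows "\<exists>y'. y' \<in> carrier G \<and> y' [^] p = \<one> \<and> cm g y' \<noteq> \<one>"
  using spanlem[OF g] ns B_x B_y B_xip B_yip by metis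

lemma relK: assumes g: "g \<in> carrier G" and h: "h \<in> carrier G" and pe: "g [^] p = \<one>" "h [^] p = \<one>"
  and ng: "\<forall>k. Z #> g \<noteq> smult_V G k (Z #> y 0)" and nh: "\<forall>k. Z #> h \<noteq> smult_V G k (Z #> y 0)"
  shows "rel (Z #> g) (Z #> h)"
proof (cases "cm g h = \<one>")
  case False then show ?thesis using core[OF g h] pe by simp
next
  case True
  obtain y1 where y1: "y1 \<in> carrier G" "y1 [^] p = \<one>" "cm g y1 \<noteq> \<one>" using radical[OF g ng] by blast
  obtain y2 where y2: "y2 \<in> carrier G" "y2 [^] p = \<one>" "cm h y2 \<noteq> \<one>" using radical[OF h nh] by blast
  show ?thesis
  proof (cases "cm h y1 = \<one>")
    case False then show ?thesis using two_step[OF g h y1(1)] pe y1 by simp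
  next
    case T1: True
    show ?thesis
    proof (cases "cm g y2 = \<one>")
      case False then show ?thesis using two_step[OF g h y2(1)] pe y2 by simp
    next
      case T2: True
      have c: "y1 \<otimes> y2 \<in> carrier G" using y1 y2 by simp
      have "(y1 \<otimes> y2) [^] p = \<one>" using y1 y2 by (simp add: pow_hom)
      moreover have "cm g (y1 \<otimes> y2) \<noteq> \<one>" using g y1 y2 T2 by (simp add: cm_mult_right)
      moreover have "cm h (y1 \<otimes> y2) \<noteq> \<one>" using h y1 y2 T1 by (simp add: cm_mult_right)
      ultimately show ?thesis using two_step[OF g h c] pe by simp
    qed
  qed
qed

end


context esg begin

interpretation ZN: normal Z G by (rule Znormal)

abbreviation "spn \<equiv> {smult_V G k (Z #> y 0) | k. True}"

lemma Vnz_D: "v \<in> Vnz G \<Longrightarrow> \<exists>g \<in> carrier G. v = Z #> g \<and> g \<notin> Z"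
proof -
  assume v: "v \<in> Vnz G"
  then obtain g where g: "g \<in> carrier G" "v = Z #> g" unfolding Vnz_def using V_carr by blast
  have "g \<notin> Z" using v g ZN.rcos_const[OF is_group] unfolding Vnz_def by auto
  then show ?thesis using g by blast
qed

lemma ZcosZ: "g \<in> carrier G \<Longrightarrow> Z #> g = Z \<Longrightarrow> g \<in> Z"
  using rcos_self[OF _ Zsub] by blast

lemma Vnz_I: "g \<in> carrier G \<Longrightarrow> g \<notin> Z \<Longrightarrow> Z #> g \<in> Vnz G"
  unfolding Vnz_def using V_in ZcosZ by blast

lemma rel_orbit: "Q_orbit G r1 = Q_orbit G r2 \<Longrightarrow> rel r1 r2"
  using rel_refl[of r2] unfolding Q_orbit_rel by blast

lemma zpow_ne1: "0 < a \<Longrightarrow> a < p \<Longrightarrow> z [^] a \<noteq> \<one>"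
  using pow_eq_id[OF z_carr] ord_z by (auto dest: dvd_imp_le)

lemma zpow_inj: "a < p \<Longrightarrow> b < p \<Longrightarrow> z [^] a = z [^] b \<Longrightarrow> a = b"
proof -
  assume ab: "a < p" "b < p" "z [^] a = z [^] b"
  have "{..<p} = {0..ord z - 1}" using ord_z p_gt1 by auto
  then show "a = b" using ord_inj[of z] ab unfolding inj_on_def by auto
qed

lemma pow_swap: "g \<in> carrier G \<Longrightarrow> (g [^] (a::nat)) [^] (b::nat) = (g [^] b) [^] a"
  by (metis nat_pow_pow mult.commute)

lemma T_A: "Tmap p G (Z #> x 0 [^] (a::nat)) = z [^] a"
  using Tmap_eq[of "x 0 [^] a"] x0c B_x0p pow_swap[OF x0c, of a p] by simp

lemma T_B: "Tmap p G (Z #> y 0 [^] (b::nat)) = \<one>"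
proof -
  have "(y 0 [^] b) [^] p = (y 0 [^] p) [^] b" using pow_swap[OF y0c] by simp
  then show ?thesis using Tmap_eq y0c B_yip[OF B_n] by simp
qed

lemma cm_x0_y0pow: "cm (x 0) (y 0 [^] (b::nat)) = z [^] b"
  using cm_pow_right[OF y0c x0c, of b] B_xy[OF B_n] by simp

lemma rB_inj: "Z #> y 0 [^] (b1::nat) = Z #> y 0 [^] (b2::nat) \<Longrightarrow> b1 < p \<Longrightarrow> b2 < p \<Longrightarrow> b1 = b2"
proof -
  assume e: "Z #> y 0 [^] b1 = Z #> y 0 [^] b2" and b: "b1 < p" "b2 < p"
  obtain c where c: "c \<in> Z" "y 0 [^] b1 = c \<otimes> y 0 [^] b2" using rcos_eq_mem e y0c by blast
  have "z [^] b1 = cm (x 0) (y 0 [^] b1)" by (simp add: cm_x0_y0pow)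
  also have "\<dots> = cm (x 0) (c \<otimes> y 0 [^] b2)" using c(2) by simp
  also have "\<dots> = z [^] b2" using c x0c y0c Z_carr by (simp add: cm_mult_right cm_Z_right cm_x0_y0pow)
  finally show ?thesis using zpow_inj b by blast
qed

lemma x1_notspan: assumes "2 \<le> n" shows "\<forall>k. Z #> x 1 \<noteq> smult_V G k (Z #> y 0)"
proof (intro allI notI)
  fix k assume "Z #> x 1 = smult_V G k (Z #> y 0)"
  then have e: "Z #> x 1 = Z #> y 0 [^] k" unfolding smult_V_def using V_pow y0c by simp
  have x1: "x 1 \<in> carrier G" "y 1 \<in> carrier G" using B_x B_y assms by auto
  obtain c where c: "c \<in> Z" "x 1 = c \<otimes> y 0 [^] k" using rcos_eq_mem e y0c x1 by blast
  have "cm (y 0) (y 1) = \<one>" using B_yy[of 0 1] assms by simp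
  then have "cm (x 1) (y 1) = \<one>" using c x1 y0c Z_carr
    by (simp add: cm_mult_left cm_Z_left cm_pow_left)
  then show False using B_xy[of 1] assms z1 by simp
qed

lemma part1: "\<forall>v \<in> Vnz G. \<forall>w \<in> Vnz G. v \<noteq> w \<and> Tmap p G v = Tmap p G w \<and>
        ((Tmap p G v \<noteq> \<one> \<and> Tmap p G w \<noteq> \<one>) \<or> (v \<notin> spn \<and> w \<notin> spn))
        \<longrightarrow> w \<in> Q_orbit G v"
proof (intro ballI impI)
  fix v w assume v: "v \<in> Vnz G" and w: "w \<in> Vnz G"
    and H: "v \<noteq> w \<and> Tmap p G v = Tmap p G w \<and> ((Tmap p G v \<noteq> \<one> \<and> Tmap p G w \<noteq> \<one>) \<or> (v \<notin> spn \<and> w \<notin> spn))"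
  obtain g where g: "g \<in> carrier G" "v = Z #> g" using Vnz_D[OF v] by blast
  obtain h where h: "h \<in> carrier G" "w = Z #> h" using Vnz_D[OF w] by blast
  have pe: "g [^] p = h [^] p" using H g h Tmap_eq by simp
  have "rel v w"
  proof (cases "g [^] p = \<one>")
    case False then show ?thesis using relT[OF g(1) h(1) pe] g h by simp
  next
    case True
    then have "v \<notin> spn \<and> w \<notin> spn" using H g Tmap_eq by auto
    then have "\<forall>k. Z #> g \<noteq> smult_V G k (Z #> y 0)" "\<forall>k. Z #> h \<noteq> smult_V G k (Z #> y 0)"
      using g h by blast+
    then show ?thesis using relK[OF g(1) h(1) True] pe True g h by simp
  qed
  then show "w \<in> Q_orbit G v" unfolding Q_orbit_rel by simp
qed

definition rA where "rA a = smult_V G a (Z #> x 0)"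
definition rB where "rB b = smult_V G b (Z #> y 0)"
lemma rA: "rA a = Z #> x 0 [^] a" unfolding rA_def smult_V_def using V_pow x0c by simp
lemma rB: "rB b = Z #> y 0 [^] b" unfolding rB_def smult_V_def using V_pow y0c by simp

lemma rA_Vnz: "0 < a \<Longrightarrow> a < p \<Longrightarrow> rA a \<in> Vnz G"
proof -
  assume a: "0 < a" "a < p"
  have "x 0 [^] a \<notin> Z"
  proof
    assume "x 0 [^] a \<in> Z"
    then have "(x 0 [^] a) [^] p = \<one>" using Zpow by blast
    then have "z [^] a = \<one>" using x0c B_x0p pow_swap[OF x0c, of a p] by simp
    then show False using zpow_ne1 a by blast
  qed
  then show ?thesis unfolding rA using Vnz_I x0c by simp
qed

lemma rB_Vnz: "0 < b \<Longrightarrow> b < p \<Longrightarrow> rB b \<in> Vnz G"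
proof -
  assume b: "0 < b" "b < p"
  have "y 0 [^] b \<notin> Z"
  proof
    assume "y 0 [^] b \<in> Z"
    then have "cm (x 0) (y 0 [^] b) = \<one>" using cm_Z_right x0c by blast
    then show False using cm_x0_y0pow[of b] zpow_ne1 b by simp
  qed
  then show ?thesis unfolding rB using Vnz_I y0c by simp
qed

lemma rC_Vnz: "2 \<le> n \<Longrightarrow> Z #> x 1 \<in> Vnz G"
proof -
  assume n: "2 \<le> n"
  have "x 1 \<notin> Z"
  proof
    assume "x 1 \<in> Z"
    then have "cm (x 1) (y 1) = \<one>" using cm_Z_left B_y n by simp
    then show False using B_xy[of 1] n z1 by simp
  qed
  then show ?thesis using Vnz_I B_x n by simp
qed

lemma classify: assumes v: "v \<in> Vnz G"
  shows "(\<exists>a \<in> {1..<p}. Q_orbit G v = Q_orbit G (rA a)) \<or> (\<exists>b \<in> {1..<p}. Q_orbit G v = Q_orbit G (rB b))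
     \<or> (2 \<le> n \<and> Q_orbit G v = Q_orbit G (Z #> x 1))"
proof -
  obtain g where g: "g \<in> carrier G" "v = Z #> g" "g \<notin> Z" using Vnz_D[OF v] by blast
  show ?thesis
  proof (cases "g [^] p = \<one>")
    case False
    define a where "a = lg (g [^] p)"
    have za: "z [^] a = g [^] p" "a < p" unfolding a_def using lg powp_Z[OF g(1)] by auto
    have a0: "a \<noteq> 0"
    proof
      assume "a = 0" then show False using za False by simp
    qed
    have "(x 0 [^] a) [^] p = g [^] p" using za x0c B_x0p pow_swap[OF x0c, of a p] by simp
    then have "rel v (rA a)" unfolding rA g(2) using relT[OF g(1), of "x 0 [^] a"] False x0c by simp
    then have "Q_orbit G v = Q_orbit G (rA a)" using orbit_eq g by simp
    then show ?thesis using za a0 by auto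
  next
    case True
    show ?thesis
    proof (cases "\<exists>k. Z #> g = smult_V G k (Z #> y 0)")
      case True
      then obtain k where "Z #> g = smult_V G k (Z #> y 0)" by blast
      then have k: "v = Z #> y 0 [^] k" using g(2) V_pow[OF y0c] unfolding smult_V_def by simp
      define b where "b = k mod p"
      have "y 0 [^] k = y 0 [^] b" unfolding b_def using pow_mod y0c B_yip B_n by blast
      then have vb: "v = rB b" using k rB by simp
      have "b < p" unfolding b_def using p_gt1 by simp
      moreover have "b \<noteq> 0" using vb v rB coset_mult_one[OF ZN.subset] unfolding Vnz_def by auto
      ultimately show ?thesis using vb by auto
    next
      case False
      have n2: "2 \<le> n"
      proof (rule ccontr)
        assume "\<not> 2 \<le> n"
        then have n1: "n = 1" using B_n by simp
        have "cm g (y 0) = \<one>" using Tid g \<open>g [^] p = \<one>\<close> by simp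
        then have "\<exists>k. Z #> g = smult_V G k (Z #> y 0)"
          using spanlem[OF g(1)] n1 by auto
        then show False using False by blast
      qed
      have x1: "x 1 \<in> carrier G" "x 1 [^] p = \<one>" using B_x B_xip n2 by auto
      have "rel v (Z #> x 1)" unfolding g(2)
        using relK[OF g(1) x1(1) True x1(2)] False x1_notspan[OF n2] by blast
      then show ?thesis using orbit_eq g n2 by simp
    qed
  qed
qed

lemma orbitsAB: "Q_orbit G ` Vnz G \<subseteq> (\<lambda>a. Q_orbit G (rA a)) ` {1..<p} \<union> (\<lambda>b. Q_orbit G (rB b)) ` {1..<p} \<union>
   (if 2 \<le> n then {Q_orbit G (Z #> x 1)} else {})"
  using classify by fastforce

lemma inj_A: "inj_on (\<lambda>a. Q_orbit G (rA a)) {1..<p}"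
proof (rule inj_onI)
  fix a1 a2 assume a: "a1 \<in> {1..<p}" "a2 \<in> {1..<p}" and e: "Q_orbit G (rA a1) = Q_orbit G (rA a2)"
  obtain \<phi> where \<phi>: "\<phi> \<in> AutZ G" "f_map \<phi> (rA a1) = rA a2" using rel_orbit[OF e] unfolding rel_def by blast
  have "Tmap p G (f_map \<phi> (rA a1)) = Tmap p G (rA a1)" unfolding rA by (rule aut_Tmap[OF \<phi>(1)]) (simp add: x0c)
  then have "Tmap p G (rA a2) = Tmap p G (rA a1)" using \<phi>(2) by simp
  then have "z [^] a2 = z [^] a1" unfolding rA T_A .
  then show "a1 = a2" using zpow_inj a by auto
qed

lemma inj_B: "inj_on (\<lambda>b. Q_orbit G (rB b)) {1..<p}"
proof (rule inj_onI)
  fix a1 a2 assume a: "a1 \<in> {1..<p}" "a2 \<in> {1..<p}" and e: "Q_orbit G (rB a1) = Q_orbit G (rB a2)"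
  obtain \<phi> where \<phi>: "\<phi> \<in> AutZ G" "f_map \<phi> (rB a1) = rB a2" using rel_orbit[OF e] unfolding rel_def by blast
  have "rB a1 = rB a2" using aut_span[OF \<phi>(1)] \<phi>(2) unfolding rB_def by simp
  then show "a1 = a2" using rB_inj a unfolding rB by auto
qed

lemma disj_AB: "a \<in> {1..<p} \<Longrightarrow> b \<in> {1..<p} \<Longrightarrow> Q_orbit G (rA a) \<noteq> Q_orbit G (rB b)"
proof
  assume a: "a \<in> {1..<p}" and e: "Q_orbit G (rA a) = Q_orbit G (rB b)"
  obtain \<phi> where \<phi>: "\<phi> \<in> AutZ G" "f_map \<phi> (rA a) = rB b" using rel_orbit[OF e] unfolding rel_def by blast
  have "Tmap p G (f_map \<phi> (rA a)) = Tmap p G (rA a)" unfolding rA by (rule aut_Tmap[OF \<phi>(1)]) (simp add: x0c)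
  then have "Tmap p G (rB b) = Tmap p G (rA a)" using \<phi>(2) by simp
  then have "\<one> = z [^] a" unfolding rA rB T_A T_B .
  moreover have "0 < a" "a < p" using a by auto
  ultimately show False using zpow_ne1[of a] by simp
qed

lemma C_notA: "2 \<le> n \<Longrightarrow> a \<in> {1..<p} \<Longrightarrow> Q_orbit G (rA a) \<noteq> Q_orbit G (Z #> x 1)"
proof
  assume n: "2 \<le> n" and a: "a \<in> {1..<p}" and e: "Q_orbit G (rA a) = Q_orbit G (Z #> x 1)"
  obtain \<phi> where \<phi>: "\<phi> \<in> AutZ G" "f_map \<phi> (rA a) = Z #> x 1" using rel_orbit[OF e] unfolding rel_def by blast
  have "Tmap p G (f_map \<phi> (rA a)) = Tmap p G (rA a)" unfolding rA by (rule aut_Tmap[OF \<phi>(1)]) (simp add: x0c)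
  then have "Tmap p G (Z #> x 1) = Tmap p G (rA a)" using \<phi>(2) by simp
  moreover have "Tmap p G (Z #> x 1) = \<one>" using Tmap_eq B_x B_xip n by simp
  ultimately have "\<one> = z [^] a" unfolding rA T_A by simp
  moreover have "0 < a" "a < p" using a by auto
  ultimately show False using zpow_ne1[of a] by simp
qed

lemma C_notB: "2 \<le> n \<Longrightarrow> Q_orbit G (rB b) \<noteq> Q_orbit G (Z #> x 1)"
proof
  assume n: "2 \<le> n" and e: "Q_orbit G (rB b) = Q_orbit G (Z #> x 1)"
  obtain \<phi> where \<phi>: "\<phi> \<in> AutZ G" "f_map \<phi> (rB b) = Z #> x 1" using rel_orbit[OF e] unfolding rel_def by blast
  have "Z #> x 1 = smult_V G b (Z #> y 0)" using aut_span[OF \<phi>(1)] \<phi>(2) unfolding rB_def by simp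
  then show False using x1_notspan[OF n] by blast
qed

lemma setA: "{Q_orbit G (smult_V G a (Z #> x 0)) | a. a \<in> {1..<p}} = (\<lambda>a. Q_orbit G (rA a)) ` {1..<p}"
  unfolding rA_def by auto
lemma setB: "{Q_orbit G (smult_V G a (Z #> y 0)) | a. a \<in> {1..<p}} = (\<lambda>a. Q_orbit G (rB a)) ` {1..<p}"
  unfolding rB_def by auto

lemma cardAB: "card ((\<lambda>a. Q_orbit G (rA a)) ` {1..<p} \<union> (\<lambda>b. Q_orbit G (rB b)) ` {1..<p}) = 2 * p - 2"
proof -
  have "card ((\<lambda>a. Q_orbit G (rA a)) ` {1..<p} \<union> (\<lambda>b. Q_orbit G (rB b)) ` {1..<p})
     = card ((\<lambda>a. Q_orbit G (rA a)) ` {1..<p}) + card ((\<lambda>b. Q_orbit G (rB b)) ` {1..<p})"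
    by (rule card_Un_disjoint) (use disj_AB in auto)
  also have "\<dots> = (p - 1) + (p - 1)" using card_image[OF inj_A] card_image[OF inj_B] by simp
  finally show ?thesis by simp
qed

lemma range_eq: "Q_orbit G ` Vnz G = (\<lambda>a. Q_orbit G (rA a)) ` {1..<p} \<union> (\<lambda>b. Q_orbit G (rB b)) ` {1..<p} \<union>
   (if 2 \<le> n then {Q_orbit G (Z #> x 1)} else {})" (is "?L = ?R")
proof
  show "?L \<subseteq> ?R" by (rule orbitsAB)
  show "?R \<subseteq> ?L"
    using rA_Vnz rB_Vnz rC_Vnz by (auto split: if_splits)
qed

lemma part2: "n = 1 \<Longrightarrow> Q_orbit G ` Vnz G =
          {Q_orbit G (smult_V G a (Z #> x 0)) | a. a \<in> {1..<p}} \<union>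
          {Q_orbit G (smult_V G b (Z #> y 0)) | b. b \<in> {1..<p}}
        \<and> card (Q_orbit G ` Vnz G) = 2 * p - 2"
  using range_eq cardAB unfolding setA setB by simp

lemma part3: "2 \<le> n \<Longrightarrow> Q_orbit G ` Vnz G =
          {Q_orbit G (smult_V G a (Z #> x 0)) | a. a \<in> {1..<p}} \<union>
          {Q_orbit G (smult_V G b (Z #> y 0)) | b. b \<in> {1..<p}} \<union>
          {Q_orbit G (Z #> x 1)}
        \<and> card (Q_orbit G ` Vnz G) = 2 * p - 1"
proof -
  assume n: "2 \<le> n"
  have "Q_orbit G (Z #> x 1) \<notin> (\<lambda>a. Q_orbit G (rA a)) ` {1..<p} \<union> (\<lambda>b. Q_orbit G (rB b)) ` {1..<p}"
    using C_notA[OF n] C_notB[OF n] by force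
  then have "card ((\<lambda>a. Q_orbit G (rA a)) ` {1..<p} \<union> (\<lambda>b. Q_orbit G (rB b)) ` {1..<p} \<union> {Q_orbit G (Z #> x 1)})
     = 2 * p - 2 + 1" using cardAB by simp
  also have "\<dots> = 2 * p - 1" using p_gt1 by simp
  finally show ?thesis using range_eq n unfolding setA setB by simp
qed

lemma order_G: "order G = p ^ (2 * n + 1)"
proof -
  have "card (rcosets Z) * card Z = order G" using lagrange[OF Zsub] .
  moreover have "rcosets Z = carrier (Vsp G)" by (simp add: FactGroup_def)
  moreover have "card (carrier (Vsp G)) = card (({..<n} \<rightarrow>\<^sub>E {..<p}) \<times> ({..<n} \<rightarrow>\<^sub>E {..<p}))"
    using bij_betw_same_card[OF B_bij] by simp
  moreover have "card (({..<n} \<rightarrow>\<^sub>E {..<p}) \<times> ({..<n} \<rightarrow>\<^sub>E {..<p})) = p ^ n * p ^ n"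
    by (simp add: card_cartesian_product card_PiE)
  ultimately have "order G = p ^ n * p ^ n * p" using Zcard by simp
  then show ?thesis by (simp add: power_add mult_2 power_Suc2)
qed

lemma n_cases: "(order G = p ^ 3 \<longrightarrow> n = 1) \<and> (order G > p ^ 3 \<longrightarrow> 2 \<le> n)"
proof -
  have "order G = p ^ 3 \<Longrightarrow> n = 1"
    using order_G p_gt1 power_inject_exp[of p "2 * n + 1" 3] by simp
  moreover have "order G > p ^ 3 \<Longrightarrow> 2 \<le> n"
    using order_G p_gt1 power_less_imp_less_exp[of p 3 "2 * n + 1"] by simp
  ultimately show ?thesis by blast
qed

end



theorem lemma4p7:
  fixes G :: "('a, 'b) monoid_scheme" and p n :: nat and z :: 'a and x y :: "nat \<Rightarrow> 'a"
  assumes "Factorial_Ring.prime p" and "odd p"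
    and "extraspecial_p_group p G"
    and "grp_exponent G = p ^ 2"
    and "z \<in> grp_center G" and "z \<noteq> \<one>\<^bsub>G\<^esub>"
    and "special_symplectic_basis p G z n x y"
  shows
    "(\<forall>v \<in> Vnz G. \<forall>w \<in> Vnz G. v \<noteq> w \<and> Tmap p G v = Tmap p G w \<and>
        ((Tmap p G v \<noteq> \<one>\<^bsub>G\<^esub> \<and> Tmap p G w \<noteq> \<one>\<^bsub>G\<^esub>) \<or>
         (v \<notin> {smult_V G k (grp_center G #>\<^bsub>G\<^esub> y 0) | k. True} \<and>
          w \<notin> {smult_V G k (grp_center G #>\<^bsub>G\<^esub> y 0) | k. True}))
        \<longrightarrow> w \<in> Q_orbit G v)
   \<and> (order G = p ^ 3 \<longrightarrow>
        Q_orbit G ` Vnz G =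
          {Q_orbit G (smult_V G a (grp_center G #>\<^bsub>G\<^esub> x 0)) | a. a \<in> {1..<p}} \<union>
          {Q_orbit G (smult_V G b (grp_center G #>\<^bsub>G\<^esub> y 0)) | b. b \<in> {1..<p}}
        \<and> card (Q_orbit G ` Vnz G) = 2 * p - 2)
   \<and> (order G > p ^ 3 \<longrightarrow>
        Q_orbit G ` Vnz G =
          {Q_orbit G (smult_V G a (grp_center G #>\<^bsub>G\<^esub> x 0)) | a. a \<in> {1..<p}} \<union>
          {Q_orbit G (smult_V G b (grp_center G #>\<^bsub>G\<^esub> y 0)) | b. b \<in> {1..<p}} \<union>
          {Q_orbit G (grp_center G #>\<^bsub>G\<^esub> x 1)}
        \<and> card (Q_orbit G ` Vnz G) = 2 * p - 1)"
proof -
  have sp: "special_p_group p G" and cZ: "card (grp_center G) = p"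
    using assms(3) by (auto simp: extraspecial_p_group_def)
  have pg: "p_group p G" and dZ: "grp_center G = derived G (carrier G)"
    and ea: "elementary_abelian_subgroup p (grp_center G) G"
    using sp by (auto simp: special_p_group_def)
  have grp: "group G" and fin: "finite (carrier G)" using pg by (auto simp: p_group_def)
  have comm: "grp_comm G g h \<in> grp_center G" if "g \<in> carrier G" "h \<in> carrier G" for g h
  proof -
    have "grp_comm G g h \<in> derived_set G (carrier G)" unfolding grp_comm_def using that by blast
    then show ?thesis unfolding dZ derived_def by (rule generate.incl)
  qed
  have sub: "subgroup (grp_center G) G" and zp: "\<forall>c \<in> grp_center G. c [^]\<^bsub>G\<^esub> p = \<one>\<^bsub>G\<^esub>"
    using ea by (auto simp: elementary_abelian_subgroup_def)
  have ax: "esg_axioms G p z n x y"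
    unfolding esg_axioms_def using fin assms(1,2,5,6,7) sub zp cZ comm by blast
  interpret esg G p z n x y by (rule esg.intro[OF grp ax])
  show ?thesis using part1 part2 part3 n_cases by blast
qed



end
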